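(* For all natural numbers $n,b\ge1$, $$s\big(2n^2b^2+2nb+1,\,2nb^2\big)=\frac{2n^2b^2-3nb^2+1}{12nb^2}.$$
   Context: For an integer $q\neq0$ and an integer $p$ (or residue class of $p$ mod $q$), the Dedekind sum is $$s(p,q)=\sum_{i=1}^{|q|}\Big(\Big(\frac{i}{q}\Big)\Big)\Big(\Big(\frac{pi}{q}\Big)\Big),$$ where $((x))=0$ if $x\in\mathbb{Z}$ and $((x))=x-\lfloor x\rfloor-\tfrac12$ otherwise. *)

theory Defs
  imports Complex_Main
begin

definition sawtooth :: "real \<Rightarrow> real" where
  "sawtooth x = (if x \<in> \<int> then 0 else x - of_int \<lfloor>x\<rfloor> - 1/2)"

definition dedekind_sum :: "int \<Rightarrow> int \<Rightarrow> real" where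
  "dedekind_sum p q = (\<Sum>i\<in>{1..\<bar>q\<bar>}. sawtooth (of_int i / of_int q) * sawtooth (of_int (p * i) / of_int q))"

end

theory Submission
  imports Defs
begin

lemma saw_int:
  assumes q: "q > 0"
  shows "sawtooth (of_int y / of_int q) =
    (if y mod q = 0 then 0 else of_int (y mod q) / of_int q - 1/2)"
proof -
  have fl: "\<lfloor>of_int y / of_int q :: real\<rfloor> = y div q" by (rule floor_divide_of_int_eq)
  have e: "real_of_int y = of_int q * of_int (y div q) + of_int (y mod q)"
    by (metis of_int_add of_int_mult mult_div_mod_eq)
  have dec: "of_int y / of_int q = of_int (y div q) + of_int (y mod q) / (of_int q::real)"
    using q by (simp add: e field_simps)
  show ?thesis
  proof (cases "y mod q = 0")
    case True
    then have "of_int y / of_int q = (of_int (y div q) :: real)" using dec by simp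
    then show ?thesis using True by (simp add: sawtooth_def)
  next
    case False
    have "of_int y / of_int q \<notin> (\<int>::real set)"
    proof
      assume "of_int y / of_int q \<in> (\<int>::real set)"
      then obtain z where z: "of_int y / of_int q = (of_int z::real)" by (auto elim: Ints_cases)
      then have "real_of_int y = of_int (q * z)" using q by (simp add: field_simps)
      then have "y = q * z" by linarith
      then show False using False by simp
    qed
    then show ?thesis using False fl dec by (simp add: sawtooth_def)
  qed
qed

lemma sum_group:
  fixes M b :: nat
  shows   "(\<Sum>i<M*b. g i) = (\<Sum>k<M. \<Sum>r<b. g (k*b + r))"
proof (induction M)
  case 0 then show ?case by simp
next
  case (Suc M)
  have "(\<Sum>i<Suc M*b. g i) = (\<Sum>i<M*b. g i) + (\<Sum>r<b. g (M*b + r))"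
  proof -
    have "{..<Suc M*b} = {..<M*b} \<union> {M*b..<M*b+b}" by auto
    then have "(\<Sum>i<Suc M*b. g i) = (\<Sum>i<M*b. g i) + (\<Sum>i\<in>{M*b..<M*b+b}. g i)"
      by (simp add: sum.union_disjoint ivl_disj_int)
    also have "(\<Sum>i\<in>{M*b..<M*b+b}. g i) = (\<Sum>r<b. g (M*b + r))"
    proof -
      have "(\<Sum>i\<in>{0+M*b..<b+M*b}. g i) = (\<Sum>i\<in>{0..<b}. g (i+M*b))"
        by (rule sum.shift_bounds_nat_ivl)
      then show ?thesis by (simp add: atLeast0LessThan add.commute)
    qed
    finally show ?thesis .
  qed
  then show ?case using Suc by simp
qed

lemma sum_split:
  fixes N m :: nat
  shows   "(\<Sum>k<N+m. g k) = (\<Sum>k<N. g k) + (\<Sum>j<m. g (N + j))"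
  by (induction m) (auto simp: ac_simps)

lemma sum_quad:
  fixes N :: nat
  shows   "(\<Sum>k<N. A*(real k)^2 + B*real k + C) =
     A*(real N*(real N-1)*(2*real N-1)/6) + B*(real N*(real N - 1)/2) + C*real N"
  by (induction N) (auto simp: field_simps power2_eq_square)

lemma mod_key:
  fixes n b c k r M Q P :: nat
  assumes k: "k < M" and r: "r < b" and M: "M = c*b" and Q: "Q = M*b"
    and P: "P = n*Q + c*b + 1"
  shows "(P*(k*b+r)) mod Q = ((k + c*r) mod M)*b + r"
proof -
  define d where "d = (k+c*r) div M"
  define t where "t = (k+c*r) mod M"
  have h: "k + c*r = d*M + t" unfolding d_def t_def by simp
  have e1: "P*(k*b+r) = n*Q*(k*b+r) + k*Q + b*(k+c*r) + r"
    by (simp add: P Q M algebra_simps)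
  have e2: "b*(k+c*r) = d*Q + t*b" using h by (simp add: Q algebra_simps)
  have "P*(k*b+r) = (n*(k*b+r) + k + d)*Q + (t*b + r)"
    using e1 e2 by (simp add: algebra_simps)
  moreover have "t < M" unfolding t_def using k by simp
  then have "t*b + r < Q"
  proof -
    have "t + 1 \<le> M" using \<open>t < M\<close> by simp
    then have "(t+1)*b \<le> M*b" by (rule mult_right_mono) simp
    then show ?thesis using r Q by (simp add: algebra_simps)
  qed
  ultimately show ?thesis unfolding t_def by simp
qed

lemma alg0: fixes b c r :: real
shows "(b^2*((c*b - c*r)*((c*b-c*r)-1)*(2*(c*b-c*r)-1)/6) + (b^2*(c*r) + 2*(r - c*b*b/2)*b)*((c*b-c*r)*((c*b-c*r)-1)/2) + (r-c*b*b/2)*((c*r)*b + (r - c*b*b/2))*(c*b-c*r))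
 + (b^2*((c*r)*((c*r)-1)*(2*(c*r)-1)/6) + (b*((c*b - c*r)*b + 2*(r-c*b*b/2)))*((c*r)*((c*r)-1)/2) + ((c*b-c*r)*b + (r-c*b*b/2))*(r-c*b*b/2)*(c*r))
 = (c*b) * (b^2 * c^2/2 + 1) * r^2
    + (b^2 * (c * ((c*b)*((c*b)-1)/2) - (c*b)*c*(2*(c*b)-1)/2)
       + 2*b*((c*b)*((c*b)-1)/2) - (c*b)*(c*b*b)) * r
    + (b^2 * ((c*b)*((c*b)-1)*(2*(c*b)-1)/6)
       - b * (c*b*b) * ((c*b)*((c*b)-1)/2) + (c*b) * (c*b*b)^2/4)"
  by (simp add: field_simps) (simp add: algebra_simps eval_nat_numeral)

lemma alg: fixes b c r N S M Q u :: real
  assumes "N = M - S" "S = c*r" "M = c*b" "Q = c*b*b" "u = r - Q/2"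
  shows "(b^2*(N*(N-1)*(2*N-1)/6) + (b^2*S + 2*u*b)*(N*(N-1)/2) + u*(S*b+u)*N)
   + (b^2*(S*(S-1)*(2*S-1)/6) + (b*((M-S)*b + 2*u))*(S*(S-1)/2) + ((M-S)*b+u)*u*S)
   = M * (b^2 * c^2/2 + 1) * r^2
    + (b^2 * (c * (M*(M-1)/2) - M*c*(2*M-1)/2)
       + 2*b*(M*(M-1)/2) - M*Q) * r
    + (b^2 * (M*(M-1)*(2*M-1)/6)
       - b * Q * (M*(M-1)/2) + M * Q^2/4)"
  using alg0[of b c r] unfolding assms by simp

lemma inner:
  fixes b c r :: nat
  assumes r: "r < b" and c: "c > 0"
  shows "(\<Sum>k<c*b. (real (k*b+r) - real (c*b*b)/2) *
            (real (((k+c*r) mod (c*b))*b + r) - real (c*b*b)/2)) =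
    real (c*b) * ((real b)^2 * (real c)^2/2 + 1) * (real r)^2
    + ((real b)^2 * (real c * (real (c*b)*(real (c*b)-1)/2) - real (c*b)*real c*(2*real (c*b)-1)/2)
       + 2*real b*(real (c*b)*(real (c*b)-1)/2) - real (c*b)*real (c*b*b)) * real r
    + ((real b)^2 * (real (c*b)*(real (c*b)-1)*(2*real (c*b)-1)/6)
       - real b * real (c*b*b) * (real (c*b)*(real (c*b)-1)/2) + real (c*b) * (real (c*b*b))^2/4)"
  (is "?L = ?R")
proof -
  define M where "M = c*b"
  define Q where "Q = c*b*b"
  define s where "s = c*r"
  define u where "u = real r - real Q/2"
  have sM: "s < M" unfolding s_def M_def using r c by simp
  define f1 where "f1 = (\<lambda>k::nat. (real b)^2 * (real k)^2 + ((real b)^2*real s + 2*u*b) * real k + u*(real s*b+u))"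
  define f2 where "f2 = (\<lambda>j::nat. (real b)^2 * (real j)^2 + (real b*((real M-real s)*b + 2*u)) * real j + ((real M - real s)*b+u)*u)"
  have "?L = (\<Sum>k<M. (real k*b + u) * (real ((k+s) mod M)*b + u))"
    unfolding M_def Q_def s_def u_def by (simp add: algebra_simps)
  also have "\<dots> = (\<Sum>k<M-s. (real k*b + u) * (real ((k+s) mod M)*b + u))
       + (\<Sum>j<s. (real (M-s+j)*b + u) * (real ((M-s+j+s) mod M)*b + u))"
    using sum_split[where N="M-s" and m=s and g="\<lambda>k. (real k*b + u) * (real ((k+s) mod M)*b + u)"] sM
    by simp
  also have "(\<Sum>k<M-s. (real k*b + u) * (real ((k+s) mod M)*b + u)) = (\<Sum>k<M-s. f1 k)"
  proof (rule sum.cong)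
    fix k assume "k \<in> {..<M-s}"
    then have "(k+s) mod M = k+s" by simp
    then show "(real k*b + u) * (real ((k+s) mod M)*b + u) = f1 k"
      unfolding f1_def by (simp add: algebra_simps power2_eq_square)
  qed simp
  also have "(\<Sum>j<s. (real (M-s+j)*b + u) * (real ((M-s+j+s) mod M)*b + u)) = (\<Sum>j<s. f2 j)"
  proof (rule sum.cong)
    fix j assume j: "j \<in> {..<s}"
    then have "(M-s+j+s) mod M = j" using sM by simp
    moreover have "real (M-s+j) = real M - real s + real j" using sM by simp
    ultimately show "(real (M-s+j)*b + u) * (real ((M-s+j+s) mod M)*b + u) = f2 j"
      unfolding f2_def by (simp add: algebra_simps power2_eq_square)
  qed simp
  also have "(\<Sum>k<M-s. f1 k) + (\<Sum>j<s. f2 j) = ?R"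
    unfolding f1_def f2_def sum_quad M_def
    by (rule alg[where N="real(c*b-s)" and S="real s" and M="real(c*b)" and Q="real(c*b*b)"
         and u=u and b="real b" and c="real c" and r="real r"])
       (use sM in \<open>simp_all add: M_def Q_def s_def u_def of_nat_diff less_imp_le\<close>)
  finally show ?thesis .
qed

lemma fin0: fixes b n :: real
  assumes "b > 0" "n > 0"
  shows "(((2*n)*b) * (b^2 * (2*n)^2/2 + 1) * (b*(b-1)*(2*b-1)/6)
    + (b^2 * ((2*n) * (((2*n)*b)*(((2*n)*b)-1)/2) - ((2*n)*b)*(2*n)*(2*((2*n)*b)-1)/2)
       + 2*b*(((2*n)*b)*(((2*n)*b)-1)/2) - ((2*n)*b)*((2*n)*b*b)) * (b*(b-1)/2)
    + (b^2 * (((2*n)*b)*(((2*n)*b)-1)*(2*((2*n)*b)-1)/6)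
       - b * ((2*n)*b*b) * (((2*n)*b)*(((2*n)*b)-1)/2) + ((2*n)*b) * ((2*n)*b*b)^2/4) * b)
    / ((2*n)*b*b)^2 - 1/4
  = (2 * n^2 * b^2 - 3 * n * b^2 + 1) / (12 * n * b^2)"
  using assms by (simp add: field_simps) (simp add: algebra_simps eval_nat_numeral)

lemma fin:
  fixes b n c M Q A B C :: real
  assumes "b > 0" "n > 0" "c = 2*n" "M = c*b" "Q = c*b*b"
    "A = M * (b^2 * c^2/2 + 1)"
    "B = b^2 * (c * (M*(M-1)/2) - M*c*(2*M-1)/2) + 2*b*(M*(M-1)/2) - M*Q"
    "C = b^2 * (M*(M-1)*(2*M-1)/6) - b * Q * (M*(M-1)/2) + M * Q^2/4"
  shows "(A * (b*(b-1)*(2*b-1)/6) + B * (b*(b-1)/2) + C * b) / Q^2 - 1/4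
     = (2 * n^2 * b^2 - 3 * n * b^2 + 1) / (12 * n * b^2)"
  using fin0[OF assms(1,2)] unfolding assms(3-8) by simp

theorem corollary2:
  fixes n b :: nat
  assumes "n \<ge> 1" and "b \<ge> 1"
  shows "dedekind_sum (2 * int n^2 * int b^2 + 2 * int n * int b + 1) (2 * int n * int b^2)
         = (2 * real n^2 * real b^2 - 3 * real n * real b^2 + 1) / (12 * real n * real b^2)"
proof -
  define c where "c = 2*n"
  define M where "M = c*b"
  define Q where "Q = M*b"
  define P where "P = n*Q + c*b + 1"
  have c0: "c > 0" and b0: "b > 0" using assms unfolding c_def by auto
  have M0: "M > 0" and Q0: "Q > 0" using c0 b0 unfolding M_def Q_def by auto
  have eP: "2 * int n^2 * int b^2 + 2 * int n * int b + 1 = int P"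
    by (simp add: P_def Q_def M_def c_def power2_eq_square algebra_simps)
  have eQ: "2 * int n * int b^2 = int Q"
    by (simp add: Q_def M_def c_def power2_eq_square algebra_simps)
  define Fn where "Fn = (\<lambda>y::nat. if y = 0 then 0 else real y / real Q - 1/2)"
  define G where "G = (\<lambda>i::nat. Fn (i mod Q) * Fn ((P*i) mod Q))"
  have term1: "sawtooth (of_int (int i) / of_int (int Q)) = Fn (i mod Q)" for i :: nat
  proof -
    have h: "int i mod int Q = int (i mod Q)" by (simp add: zmod_int)
    show ?thesis using saw_int[of "int Q" "int i"] Q0 unfolding h by (simp add: Fn_def)
  qed
  have term2: "sawtooth (of_int (int P * int i) / of_int (int Q)) = Fn ((P*i) mod Q)" for i :: nat
    using term1[of "P*i"] by simp
  have term3: "sawtooth (real_of_int (int P) * real_of_int (int i) / real_of_int (int Q)) = Fn ((P*i) mod Q)" for i :: nat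
    using term2[of i] by (simp del: of_int_of_nat_eq)
  have ds: "dedekind_sum (int P) (int Q) = (\<Sum>i\<in>{1..Q}. G i)"
  proof -
    have "{1..\<bar>int Q\<bar>} = int ` {1..Q}" by (simp add: image_int_atLeastAtMost)
    then have "dedekind_sum (int P) (int Q) = (\<Sum>i\<in>int ` {1..Q}. sawtooth (of_int i / of_int (int Q)) *
        sawtooth (of_int (int P * i) / of_int (int Q)))"
      unfolding dedekind_sum_def by simp
    also have "\<dots> = (\<Sum>i\<in>{1..Q}. G i)"
      by (subst sum.reindex) (auto simp: G_def term1 term2 term3 simp del: of_int_of_nat_eq)
    finally show ?thesis .
  qed
  have G0: "G 0 = 0" and GQ: "G Q = 0" by (simp_all add: G_def Fn_def)
  have "dedekind_sum (int P) (int Q) = (\<Sum>i\<in>{1..Q}. G i)" by (rule ds)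
  also have "\<dots> = (\<Sum>i<Q. G i)"
  proof -
    have "(\<Sum>i\<in>{1..Q}. G i) = (\<Sum>k<Q. G (Suc k))"
      using sum.atLeast1_atMost_eq[of G Q] by simp
    also have "\<dots> = (\<Sum>i<Suc Q. G i)" using sum.lessThan_Suc_shift[of G Q] G0 by simp
    also have "\<dots> = (\<Sum>i<Q. G i)" using GQ by simp
    finally show ?thesis .
  qed
  also have "\<dots> = (\<Sum>k<M. \<Sum>r<b. G (k*b + r))"
    unfolding Q_def by (rule sum_group)
  also have "\<dots> = (\<Sum>k<M. \<Sum>r<b. (real (k*b+r) - real (c*b*b)/2) *
            (real (((k+c*r) mod (c*b))*b + r) - real (c*b*b)/2) / (real Q)^2
            - (if k = 0 then (if r = 0 then 1/4 else 0) else 0))"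
  proof (intro sum.cong refl)
    fix k r assume k: "k \<in> {..<M}" and r: "r \<in> {..<b}"
    have lt: "k*b + r < Q"
    proof -
      have "k + 1 \<le> M" using k by simp
      then have "(k+1)*b \<le> M*b" by (rule mult_right_mono) simp
      then show ?thesis using r Q_def by (simp add: algebra_simps)
    qed
    define t where "t = (k + c*r) mod M"
    have m1: "(k*b+r) mod Q = k*b+r" using lt by simp
    have m2: "(P*(k*b+r)) mod Q = t*b + r"
      unfolding t_def by (rule mod_key[of k M r b c Q P n]) (use k r in \<open>auto simp: M_def Q_def P_def\<close>)
    have Qr: "real (c*b*b) = real Q" by (simp add: Q_def M_def)
    show "G (k*b + r) = (real (k*b+r) - real (c*b*b)/2) *
            (real (((k+c*r) mod (c*b))*b + r) - real (c*b*b)/2) / (real Q)^2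
            - (if k = 0 then (if r = 0 then 1/4 else 0) else 0)"
    proof (cases "k = 0 \<and> r = 0")
      case True
      then have "t = 0" unfolding t_def by simp
      then show ?thesis using True Q0 unfolding G_def m1 m2 Qr
        by (simp add: Fn_def t_def M_def power2_eq_square field_simps)
    next
      case False
      have t0: "t*b + r \<noteq> 0"
      proof
        assume "t*b + r = 0"
        then have "r = 0" "t = 0" using b0 by auto
        then have "k mod M = 0" unfolding t_def by simp
        then show False using k False \<open>r = 0\<close> by simp
      qed
      have k0: "k*b + r \<noteq> 0" using False b0 by auto
      have "G (k*b+r) = (real (k*b+r) / real Q - 1/2) * (real (t*b+r) / real Q - 1/2)"
      proof -
        have f1: "Fn (k*b+r) = real (k*b+r) / real Q - 1/2" using k0 unfolding Fn_def by presburger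
        have f2: "Fn (t*b+r) = real (t*b+r) / real Q - 1/2" using t0 unfolding Fn_def by presburger
        show ?thesis unfolding G_def m1 m2 f1 f2 ..
      qed
      also have "\<dots> = (real (k*b+r) - real Q/2) * (real (t*b+r) - real Q/2) / (real Q)^2"
        using Q0 by (simp add: field_simps power2_eq_square)
      finally show ?thesis using False unfolding Qr t_def M_def by auto
    qed
  qed
  also have "\<dots> = (\<Sum>k<M. \<Sum>r<b. (real (k*b+r) - real (c*b*b)/2) *
            (real (((k+c*r) mod (c*b))*b + r) - real (c*b*b)/2) / (real Q)^2) - 1/4"
    using M0 b0 by (simp add: sum_subtractf sum.If_cases)
  also have "(\<Sum>k<M. \<Sum>r<b. (real (k*b+r) - real (c*b*b)/2) *
            (real (((k+c*r) mod (c*b))*b + r) - real (c*b*b)/2) / (real Q)^2)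
      = (\<Sum>r<b. (\<Sum>k<c*b. (real (k*b+r) - real (c*b*b)/2) *
            (real (((k+c*r) mod (c*b))*b + r) - real (c*b*b)/2)) / (real Q)^2)"
    unfolding M_def by (subst sum.swap) (simp add: sum_divide_distrib)
  also have "\<dots> = (\<Sum>r<b.
    (real (c*b) * ((real b)^2 * (real c)^2/2 + 1) * (real r)^2
    + ((real b)^2 * (real c * (real (c*b)*(real (c*b)-1)/2) - real (c*b)*real c*(2*real (c*b)-1)/2)
       + 2*real b*(real (c*b)*(real (c*b)-1)/2) - real (c*b)*real (c*b*b)) * real r
    + ((real b)^2 * (real (c*b)*(real (c*b)-1)*(2*real (c*b)-1)/6)
       - real b * real (c*b*b) * (real (c*b)*(real (c*b)-1)/2) + real (c*b) * (real (c*b*b))^2/4))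
    / (real Q)^2)"
    by (intro sum.cong refl) (simp only: inner[OF _ c0] lessThan_iff)
  also have "\<dots> = (\<Sum>r<b.
    (real (c*b) * ((real b)^2 * (real c)^2/2 + 1) * (real r)^2
    + ((real b)^2 * (real c * (real (c*b)*(real (c*b)-1)/2) - real (c*b)*real c*(2*real (c*b)-1)/2)
       + 2*real b*(real (c*b)*(real (c*b)-1)/2) - real (c*b)*real (c*b*b)) * real r
    + ((real b)^2 * (real (c*b)*(real (c*b)-1)*(2*real (c*b)-1)/6)
       - real b * real (c*b*b) * (real (c*b)*(real (c*b)-1)/2) + real (c*b) * (real (c*b*b))^2/4)))
    / (real Q)^2"
    by (simp add: sum_divide_distrib)
  also have "\<dots> - 1/4 = (2 * real n^2 * real b^2 - 3 * real n * real b^2 + 1) / (12 * real n * real b^2)"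
    unfolding sum_quad
    by (rule fin[where b="real b" and n="real n" and c="real c" and M="real (c*b)" and Q="real Q"])
       (use b0 assms in \<open>simp_all add: Q_def M_def c_def\<close>)
  finally have "dedekind_sum (int P) (int Q) =
     (2 * real n^2 * real b^2 - 3 * real n * real b^2 + 1) / (12 * real n * real b^2)" .
  then show ?thesis
    unfolding eP eQ .
qed

end
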